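(* For every positive integer $q$ and every real $X>0$, \[ |r_2^*(X;q)|\le \frac{2.18}{\sqrt X}\,j_1^*(q). \]
   Context: $\mu$ is the Möbius function and $\varphi$ Euler's totient. For a positive integer $q$ and real $X>0$, \[ r_2^*(X;q)=\sum_{\substack{k^2\ell r> X\\ r\mid q\\ (k\ell,q)=(k,\ell)=1}}\frac{\mu(rk\ell)\varphi(k)}{rk^3\ell^2}, \] the (absolutely convergent) sum running over triples $(k,\ell,r)$ of positive integers. Also $j_1^*(q)=\prod_{p\mid q}\frac{p^{3/2}+p}{p^{3/2}+1}$. *)

theory Defs
  imports "HOL-Analysis.Analysis" "HOL-Number_Theory.Number_Theory"
    "HOL-Computational_Algebra.Squarefree"
begin

definition moebius :: "nat \<Rightarrow> real" where
  "moebius n = (if n = 0 \<or> \<not> squarefree n then 0 else (-1) ^ card (prime_factors n))"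

definition r2_index :: "real \<Rightarrow> nat \<Rightarrow> (nat \<times> nat \<times> nat) set" where
  "r2_index X q = {(k, l, r). k > 0 \<and> l > 0 \<and> r > 0 \<and>
      real (k^2 * l * r) > X \<and> r dvd q \<and> coprime (k * l) q \<and> coprime k l}"

definition r2_star :: "real \<Rightarrow> nat \<Rightarrow> real" where
  "r2_star X q = (\<Sum>\<^sub>\<infinity>(k, l, r)\<in>r2_index X q.
      moebius (r * k * l) * real (totient k) / (real r * real k ^ 3 * real l ^ 2))"

definition j1_star :: "nat \<Rightarrow> real" where
  "j1_star q = (\<Prod>p\<in>prime_factors q.
      (real p powr (3/2) + real p) / (real p powr (3/2) + 1))"

end

theory Submission
  imports Defs
begin

lemma moebius_mult_coprime:
  fixes a b :: nat
  assumes "coprime a b"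
  shows "moebius (a * b) = moebius a * moebius b"
proof (cases "a = 0 \<or> b = 0")
  case True
  then show ?thesis using assms by (auto simp: moebius_def)
next
  case False
  then have a0: "a \<noteq> 0" and b0: "b \<noteq> 0" by auto
  have sq: "squarefree (a*b) \<longleftrightarrow> squarefree a \<and> squarefree b"
    using squarefree_mult_coprime[OF assms] squarefree_mono[of a "a*b"] squarefree_mono[of b "a*b"]
    by auto
  have pf: "prime_factors (a*b) = prime_factors a \<union> prime_factors b"
    using a0 b0 by (simp add: prime_factors_product)
  have disj: "prime_factors a \<inter> prime_factors b = {}"
  proof (rule ccontr)
    assume "prime_factors a \<inter> prime_factors b \<noteq> {}"
    then obtain p where "p \<in> prime_factors a" "p \<in> prime_factors b" by blast
    then have "prime p" "p dvd a" "p dvd b" by (auto simp: in_prime_factors_iff)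
    with assms show False
      by (metis coprime_common_divisor not_prime_unit)
  qed
  have "card (prime_factors (a*b)) = card (prime_factors a) + card (prime_factors b)"
    unfolding pf by (rule card_Un_disjoint) (use disj in auto)
  then show ?thesis using a0 b0 sq by (auto simp: moebius_def power_add)
qed

lemma abs_moebius_le: "\<bar>moebius n\<bar> \<le> 1"
  by (simp add: moebius_def)

lemma moebius_not_sqfree: "\<not> squarefree n \<Longrightarrow> moebius n = 0"
  by (simp add: moebius_def)



definition DS :: "nat set \<Rightarrow> nat set" where
  "DS S = {d. d > 0 \<and> squarefree d \<and> prime_factors d \<subseteq> S}"

lemma prod_primes_facts:
  fixes T :: "nat set"
  assumes "finite T" "\<forall>p\<in>T. prime p"
  shows "prime_factors (\<Prod>T) = T" "squarefree (\<Prod>T)" "\<Prod>T > 0"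
proof -
  have nz: "0 \<notin> id ` T" using assms(2) by auto
  have "prime_factors (prod id T) = \<Union>((prime_factors \<circ> id) ` T)"
    by (rule prime_factors_prod[OF assms(1) nz])
  also have "\<dots> = T" using assms(2) by (auto simp: prime_prime_factors)
  finally show "prime_factors (\<Prod>T) = T" by simp
  show "squarefree (\<Prod>T)"
    using squarefree_prod_coprime[of T id] assms
    by (simp add: primes_coprime squarefree_prime)
  show "\<Prod>T > 0" using assms by (simp add: prime_gt_0_nat)
qed


lemma sqfree_prod_pf:
  fixes d :: nat
  assumes "squarefree d" "d > 0"
  shows "\<Prod>(prime_factors d) = d"
proof -
  have "(\<Prod>p \<in> prime_factors d. p ^ multiplicity p d) = normalize d"
    by (rule prod_prime_factors) (use assms in auto)
  moreover have "\<And>p. p \<in> prime_factors d \<Longrightarrow> multiplicity p d = 1"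
    using assms squarefree_factorial_semiring' by blast
  ultimately show ?thesis by simp
qed

lemma bij_DS:
  assumes "finite S" "\<forall>p\<in>S. prime p"
  shows "bij_betw Prod (Pow S) (DS S)"
proof (rule bij_betw_byWitness[where f' = prime_factors])
  show "\<forall>T\<in>Pow S. prime_factors (\<Prod>T) = T"
    using assms prod_primes_facts(1) finite_subset by (metis PowD subset_iff)
  show "\<forall>d\<in>DS S. \<Prod>(prime_factors d) = d"
    by (auto simp: DS_def sqfree_prod_pf)
  show "Prod ` Pow S \<subseteq> DS S"
  proof
    fix d assume "d \<in> Prod ` Pow S"
    then obtain T where T: "T \<subseteq> S" "d = \<Prod>T" by auto
    then have ft: "finite T" "\<forall>p\<in>T. prime p" using assms finite_subset by auto
    show "d \<in> DS S" unfolding DS_def using prod_primes_facts[OF ft] T by auto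
  qed
  show "prime_factors ` DS S \<subseteq> Pow S" by (auto simp: DS_def)
qed


lemma finite_DS: "finite S \<Longrightarrow> \<forall>p\<in>S. prime p \<Longrightarrow> finite (DS S)"
  using bij_DS bij_betw_finite by blast

lemma sum_DS:
  fixes f :: "nat \<Rightarrow> 'a::comm_semiring_1"
  assumes "finite S" "\<forall>p\<in>S. prime p"
  shows "(\<Sum>d\<in>DS S. \<Prod>p\<in>prime_factors d. f p) = (\<Prod>p\<in>S. 1 + f p)"
proof -
  have "(\<Sum>d\<in>DS S. \<Prod>p\<in>prime_factors d. f p) = (\<Sum>T\<in>Pow S. \<Prod>p\<in>prime_factors (\<Prod>T). f p)"
    using sum.reindex_bij_betw[OF bij_DS[OF assms], of "\<lambda>d. \<Prod>p\<in>prime_factors d. f p"] by simp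
  also have "\<dots> = (\<Sum>T\<in>Pow S. \<Prod>p\<in>T. f p)"
  proof (rule sum.cong)
    fix T assume "T \<in> Pow S"
    then have "finite T" "\<forall>p\<in>T. prime p" using assms finite_subset by auto
    then show "(\<Prod>p\<in>prime_factors (\<Prod>T). f p) = (\<Prod>p\<in>T. f p)"
      using prod_primes_facts(1) by simp
  qed simp
  also have "\<dots> = (\<Prod>p\<in>S. f p + 1)"
    by (subst prod_add[OF assms(1)]) simp
  finally show ?thesis by (simp add: add.commute)
qed


lemma sqfree_prod_real:
  assumes "squarefree d" "d > 0"
  shows "real d = (\<Prod>p\<in>prime_factors d. real p)"
proof -
  have "real d = real (\<Prod>(prime_factors d))" using sqfree_prod_pf[OF assms] by simp
  also have "\<dots> = (\<Prod>p\<in>prime_factors d. real p)" by (rule of_nat_prod)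
  finally show ?thesis .
qed
lemma sqfree_moebius_prod:
  assumes "squarefree d" "d > 0"
  shows "moebius d = (\<Prod>p\<in>prime_factors d. (-1::real))"
  using assms by (simp add: moebius_def)
lemma sqfree_totient_prod_nat:
  assumes "squarefree d" "d > 0"
  shows "totient d = (\<Prod>p\<in>prime_factors d. p - 1)"
proof -
  have e: "d = prod id (prime_factors d)"
    using sqfree_prod_pf[OF assms] by simp
  have "totient d = totient (prod id (prime_factors d))" using e by (rule arg_cong)
  also have "\<dots> = (\<Prod>p\<in>prime_factors d. totient (id p))"
    by (rule totient_prod_coprime)
       (auto simp: pairwise_def intro!: primes_coprime)
  also have "\<dots> = (\<Prod>p\<in>prime_factors d. p - 1)"
    by (intro prod.cong refl) (auto simp: totient_prime in_prime_factors_iff)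
  finally show ?thesis .
qed

lemma sqfree_totient_prod:
  assumes "squarefree d" "d > 0"
  shows "real (totient d) = (\<Prod>p\<in>prime_factors d. real p - 1)"
proof -
  have "real (totient d) = real (\<Prod>p\<in>prime_factors d. p - 1)"
    using sqfree_totient_prod_nat[OF assms] by (rule arg_cong)
  also have "\<dots> = (\<Prod>p\<in>prime_factors d. real (p - 1))" by (rule of_nat_prod)
  also have "\<dots> = (\<Prod>p\<in>prime_factors d. real p - 1)"
    by (intro prod.cong refl) (auto simp: in_prime_factors_iff prime_ge_1_nat of_nat_diff)
  finally show ?thesis .
qed

lemma sqrt_prod_real:
  fixes f :: "'a \<Rightarrow> real"
  shows "sqrt (prod f A) = prod (\<lambda>x. sqrt (f x)) A"
proof (induction A rule: infinite_finite_induct)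
  case (insert x F)
  then show ?case by (simp add: real_sqrt_mult)
qed simp_all

lemma DS_prod_real:
  assumes "d \<in> DS S"
  shows "real d = (\<Prod>p\<in>prime_factors d. real p)"
proof -
  have "squarefree d" "d > 0" using assms unfolding DS_def by auto
  then show ?thesis by (rule sqfree_prod_real)
qed


lemma nonneg_fin_bound:
  fixes f :: "'a \<Rightarrow> real"
  assumes nn: "\<And>x. x \<in> A \<Longrightarrow> 0 \<le> f x"
  assumes fb: "\<And>F. finite F \<Longrightarrow> F \<subseteq> A \<Longrightarrow> sum f F \<le> B"
  shows "f summable_on A" "infsum f A \<le> B"
proof -
  show s: "f summable_on A"
    by (rule nonneg_bounded_partial_sums_imp_summable_on[where C=B])
       (use nn fb in auto)
  show "infsum f A \<le> B"
    by (rule infsum_le_finite_sums[OF s]) (use fb in auto)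
qed

lemma telescope_recip:
  fixes n M :: nat
  assumes "1 \<le> n" "n \<le> Suc M"
  shows "(\<Sum>k\<in>{n..M}. 1 / (real k * (real k + 1))) = 1 / real n - 1 / (real M + 1)"
  using assms(2)
proof (induction M)
  case 0
  then have "n = 1" using assms(1) by simp
  then show ?case by simp
next
  case (Suc M)
  show ?case
  proof (cases "n = Suc (Suc M)")
    case True
    then show ?thesis by (simp add: field_simps)
  next
    case False
    then have nle: "n \<le> Suc M" using Suc.prems by simp
    have "{n..Suc M} = insert (Suc M) {n..M}" using nle by auto
    then have "(\<Sum>k\<in>{n..Suc M}. 1 / (real k * (real k + 1)))
        = 1 / (real (Suc M) * (real (Suc M) + 1)) + (\<Sum>k\<in>{n..M}. 1 / (real k * (real k + 1)))"
      by simp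
    also have "\<dots> = 1 / (real (Suc M) * (real (Suc M) + 1)) + (1 / real n - 1 / (real M + 1))"
      using Suc.IH nle by simp
    also have "\<dots> = 1 / real n - 1 / (real (Suc M) + 1)"
    proof -
      have p1: "real M + 1 > 0" "real M + 2 > 0" by simp_all
      show ?thesis using p1 by (simp add: divide_simps) (simp add: algebra_simps)
    qed
    finally show ?thesis .
  qed
qed

lemma totient_cube_le:
  fixes k :: nat
  assumes "k \<ge> 2"
  shows "real (totient k) / real k ^ 3 \<le> 1 / (real k * (real k + 1))"
proof -
  have "totient k < k" using totient_less assms by simp
  then have t: "real (totient k) \<le> real k - 1" by linarith
  have kp: "real k \<ge> 2" using assms by simp
  have "real (totient k) / real k ^ 3 \<le> (real k - 1) / real k ^ 3"
    by (rule divide_right_mono[OF t]) simp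
  also have "\<dots> \<le> 1 / (real k * (real k + 1))"
  proof -
    have "(real k - 1) * (real k * (real k + 1)) \<le> real k ^ 3"
      by (simp add: power3_eq_cube algebra_simps)
    moreover have "real k ^ 3 > 0" "real k * (real k + 1) > 0" using kp by simp_all
    ultimately show ?thesis by (simp add: divide_simps)
  qed
  finally show ?thesis .
qed

lemma tail_totient:
  fixes n :: nat
  assumes "n \<ge> 2" "K \<subseteq> {n..}"
  shows "(\<lambda>k. real (totient k) / real k ^ 3) summable_on K"
        "(\<Sum>\<^sub>\<infinity>k\<in>K. real (totient k) / real k ^ 3) \<le> 1 / real n"
proof -
  have fb: "sum (\<lambda>k. real (totient k) / real k ^ 3) F \<le> 1 / real n"
    if F: "finite F" "F \<subseteq> K" for F
  proof -
    define M where "M = Max (insert n F)"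
    have FM: "F \<subseteq> {n..M}" using F assms(2) unfolding M_def by auto
    have nM: "n \<le> M" unfolding M_def using F(1) by simp
    have "sum (\<lambda>k. real (totient k) / real k ^ 3) F \<le> sum (\<lambda>k. 1 / (real k * (real k + 1))) F"
      by (rule sum_mono) (use FM assms(1) totient_cube_le in auto)
    also have "\<dots> \<le> (\<Sum>k\<in>{n..M}. 1 / (real k * (real k + 1)))"
      by (rule sum_mono2) (use FM in auto)
    also have "\<dots> = 1 / real n - 1 / (real M + 1)"
      by (rule telescope_recip) (use assms(1) nM in auto)
    also have "\<dots> \<le> 1 / real n" by simp
    finally show ?thesis .
  qed
  show "(\<lambda>k. real (totient k) / real k ^ 3) summable_on K"
       "(\<Sum>\<^sub>\<infinity>k\<in>K. real (totient k) / real k ^ 3) \<le> 1 / real n"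
    using nonneg_fin_bound[of K "\<lambda>k. real (totient k) / real k ^ 3" "1 / real n"] fb by auto
qed



lemma fin_tail_totient:
  fixes n :: nat
  assumes "n \<ge> 2" "finite F" "F \<subseteq> {n..}"
  shows "sum (\<lambda>k. real (totient k) / real k ^ 3) F \<le> 1 / real n"
proof -
  have "sum (\<lambda>k. real (totient k) / real k ^ 3) F \<le> (\<Sum>\<^sub>\<infinity>k\<in>{n..}. real (totient k) / real k ^ 3)"
    by (rule finite_sum_le_infsum) (use assms tail_totient(1)[of n "{n..}"] in auto)
  also have "\<dots> \<le> 1 / real n" using tail_totient(2)[of n "{n..}"] assms by auto
  finally show ?thesis .
qed

lemma totient_cube_summable: "(\<lambda>k. real (totient k) / real k ^ 3) summable_on {k. 0 < k}"
proof -
  have "{k::nat. 0 < k} = {1} \<union> {2..}" by auto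
  moreover have "(\<lambda>k. real (totient k) / real k ^ 3) summable_on ({1} \<union> {2..})"
    by (rule summable_on_union) (use tail_totient(1)[of 2 "{2..}"] in auto)
  ultimately show ?thesis by simp
qed

definition wt :: "nat \<Rightarrow> real" where
  "wt k = moebius k * real (totient k) / real k ^ 3"

lemma abs_wt_le: "\<bar>wt k\<bar> \<le> real (totient k) / real k ^ 3"
proof -
  have "\<bar>wt k\<bar> = \<bar>moebius k\<bar> * (real (totient k) / real k ^ 3)"
    by (simp add: wt_def abs_mult)
  also have "\<dots> \<le> 1 * (real (totient k) / real k ^ 3)"
    by (rule mult_right_mono) (auto simp: abs_moebius_le)
  finally show ?thesis by simp
qed

lemma wt_abs_summable:
  assumes "K \<subseteq> {k. 0 < k}"
  shows "(\<lambda>k. norm (wt k)) summable_on K"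
proof -
  have "(\<lambda>k. norm (real (totient k) / real k ^ 3)) summable_on K"
    using summable_on_subset[OF totient_cube_summable assms] by simp
  then show ?thesis
    by (rule Infinite_Sum.abs_summable_on_comparison_test) (use abs_wt_le in auto)
qed

lemma wt_DS:
  assumes "d \<in> DS S"
  shows "wt d = (\<Prod>p\<in>prime_factors d. (- 1) * (real p - 1) / real p ^ 3)"
proof -
  have sq: "squarefree d" "d > 0" using assms by (auto simp: DS_def)
  have "wt d = (\<Prod>p\<in>prime_factors d. (-1::real)) * (\<Prod>p\<in>prime_factors d. real p - 1)
      / (\<Prod>p\<in>prime_factors d. real p) ^ 3"
    unfolding wt_def using sqfree_moebius_prod[OF sq] sqfree_totient_prod[OF sq] sqfree_prod_real[OF sq]
    by simp
  also have "\<dots> = (\<Prod>p\<in>prime_factors d. (-1) * (real p - 1)) / (\<Prod>p\<in>prime_factors d. real p ^ 3)"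
    by (simp only: prod.distrib[symmetric] prod_power_distrib)
  also have "\<dots> = (\<Prod>p\<in>prime_factors d. (-1) * (real p - 1) / real p ^ 3)"
    by (rule prod_dividef[symmetric])
  finally show ?thesis .
qed

lemma coprime_of_pf:
  fixes k m :: nat
  assumes "k > 0" "\<forall>p\<in>prime_factors k. coprime p m"
  shows "coprime k m"
proof (rule coprimeI)
  fix c assume c: "c dvd k" "c dvd m"
  show "is_unit c"
  proof (rule ccontr)
    assume nu: "\<not> is_unit c"
    have c0: "c \<noteq> 0"
    proof
      assume "c = 0"
      then have "k = 0" using c(1) by simp
      then show False using assms(1) by simp
    qed
    obtain p where p: "p dvd c" "prime p"
      using prime_divisor_exists[OF c0 nu] by blast
    have pk: "p dvd k" "p dvd m" using dvd_trans[OF p(1) c(1)] dvd_trans[OF p(1) c(2)] by simp_all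
    then have "p \<in> prime_factors k" using p(2) assms(1) by (simp add: in_prime_factors_iff)
    with assms(2) have "coprime p m" by blast
    then have "is_unit p" using coprime_common_divisor[OF _ dvd_refl pk(2)] by blast
    then show False using not_prime_unit p(2) by blast
  qed
qed


lemma Pm_bound:
  fixes m :: nat
  assumes "m > 0"
  shows "\<bar>\<Sum>\<^sub>\<infinity>k\<in>{k. 0 < k \<and> coprime k m}. wt k\<bar> \<le> 1"
proof -
  define Kc where "Kc = {k::nat. 0 < k \<and> coprime k m}"
  have absK: "(\<lambda>k. norm (wt k)) summable_on Kc" by (rule wt_abs_summable) (auto simp: Kc_def)
  have sumK: "wt summable_on Kc" using absK abs_summable_summable by blast
  have main: "\<bar>infsum wt Kc\<bar> \<le> 1 + 1 / real (Suc (Suc N))" for N :: nat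
  proof -
    define S where "S = {p. prime p \<and> p \<le> Suc (Suc N) \<and> coprime p m}"
    have fS: "finite S" "\<forall>p\<in>S. prime p" by (auto simp: S_def)
    define A where "A = DS S"
    have fA: "finite A" unfolding A_def by (rule finite_DS[OF fS])
    have AK: "A \<subseteq> Kc"
    proof
      fix d assume "d \<in> A"
      then have d: "d > 0" "prime_factors d \<subseteq> S" by (auto simp: A_def DS_def)
      then have "coprime d m" by (intro coprime_of_pf) (auto simp: S_def)
      then show "d \<in> Kc" using d by (auto simp: Kc_def)
    qed
    have sumA: "sum wt A = (\<Prod>p\<in>S. 1 + (- 1) * (real p - 1) / real p ^ 3)"
    proof -
      have "sum wt A = (\<Sum>d\<in>DS S. \<Prod>p\<in>prime_factors d. (- 1) * (real p - 1) / real p ^ 3)"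
        unfolding A_def by (rule sum.cong) (auto simp: wt_DS)
      also have "\<dots> = (\<Prod>p\<in>S. 1 + (- 1) * (real p - 1) / real p ^ 3)"
        by (rule sum_DS[OF fS])
      finally show ?thesis .
    qed
    have fac: "0 \<le> 1 + (- 1) * (real p - 1) / real p ^ 3 \<and> 1 + (- 1) * (real p - 1) / real p ^ 3 \<le> 1"
      if "p \<in> S" for p
    proof -
      have "prime p" using that by (simp add: S_def)
      then have "p \<ge> 2" by (rule prime_ge_2_nat)
      then have p2: "real p \<ge> 2" by simp
      have "(real p - 1) \<le> real p ^ 3"
      proof -
        have "1 \<le> real p * real p" using mult_mono[of 1 "real p" 1 "real p"] p2 by simp
        then have "real p * 1 \<le> real p * (real p * real p)" using p2 by (intro mult_left_mono) auto
        then have "real p \<le> real p ^ 3" by (simp add: power3_eq_cube)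
        then show ?thesis by linarith
      qed
      then have "(real p - 1) / real p ^ 3 \<le> 1" using p2 by (simp add: divide_simps)
      moreover have "0 \<le> (real p - 1) / real p ^ 3" using p2 by simp
      moreover have "(- 1) * (real p - 1) / real p ^ 3 = - ((real p - 1) / real p ^ 3)" by (subst minus_divide_left) simp
      ultimately show ?thesis by linarith
    qed
    have A01: "\<bar>sum wt A\<bar> \<le> 1"
    proof -
      have "0 \<le> sum wt A" unfolding sumA by (rule prod_nonneg) (use fac in auto)
      moreover have "sum wt A \<le> 1" unfolding sumA by (rule prod_le_1) (use fac in auto)
      ultimately show ?thesis by simp
    qed
    have split: "infsum wt Kc = sum wt A + infsum wt (Kc - A)"
    proof -
      have "Kc = A \<union> (Kc - A)" using AK by auto
      then have "infsum wt Kc = infsum wt (A \<union> (Kc - A))" by simp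
      also have "\<dots> = infsum wt A + infsum wt (Kc - A)"
        by (rule infsum_Un_disjoint) (use fA summable_on_subset[OF sumK, of "Kc - A"] in auto)
      finally show ?thesis using fA by simp
    qed
    have rest: "\<bar>infsum wt (Kc - A)\<bar> \<le> 1 / real (Suc (Suc N))"
    proof -
      have zero: "wt k = 0" if "k \<in> Kc - A" "k < Suc (Suc N)" for k
      proof (rule ccontr)
        assume nz: "wt k \<noteq> 0"
        have sq: "squarefree k"
        proof (rule ccontr)
          assume "\<not> squarefree k"
          then have "moebius k = 0" by (rule moebius_not_sqfree)
          then show False using nz by (simp add: wt_def)
        qed
        have k0: "k > 0" "coprime k m" using that by (auto simp: Kc_def)
        have "k \<notin> DS S" using that by (auto simp: A_def)
        then obtain p where p: "p \<in> prime_factors k" "p \<notin> S" using sq k0 by (auto simp: DS_def)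
        have pk: "p \<le> k" using p k0 by (auto simp: in_prime_factors_iff dvd_imp_le)
        have pp: "prime p" "p dvd k" using p by (auto simp: in_prime_factors_iff)
        have "coprime p m" by (rule coprime_divisors[OF pp(2) dvd_refl k0(2)])
        moreover have "p \<le> Suc (Suc N)" using pk that by simp
        ultimately have "p \<in> S" using pp by (simp add: S_def)
        with p show False by blast
      qed
      have fb: "sum (\<lambda>k. norm (wt k)) F \<le> 1 / real (Suc (Suc N))" if F: "finite F" "F \<subseteq> Kc - A" for F
      proof -
        have z: "\<forall>i\<in>F - F \<inter> {Suc (Suc N)..}. norm (wt i) = 0"
        proof
          fix i assume "i \<in> F - F \<inter> {Suc (Suc N)..}"
          then have "i \<in> Kc - A" "i < Suc (Suc N)" using F by auto
          then show "norm (wt i) = 0" using zero by simp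
        qed
        have "sum (\<lambda>k. norm (wt k)) F = sum (\<lambda>k. norm (wt k)) (F \<inter> {Suc (Suc N)..})"
          by (rule sum.mono_neutral_right) (use F z in auto)
        also have "\<dots> \<le> sum (\<lambda>k. real (totient k) / real k ^ 3) (F \<inter> {Suc (Suc N)..})"
          by (rule sum_mono) (use abs_wt_le in auto)
        also have "\<dots> \<le> 1 / real (Suc (Suc N))"
          by (rule fin_tail_totient) (use F in auto)
        finally show ?thesis .
      qed
      have "(\<lambda>k. norm (wt k)) summable_on (Kc - A)" "infsum (\<lambda>k. norm (wt k)) (Kc - A) \<le> 1 / real (Suc (Suc N))"
        using nonneg_fin_bound[of "Kc - A" "\<lambda>k. norm (wt k)" "1 / real (Suc (Suc N))"] fb by auto
      then show ?thesis using norm_infsum_bound[of wt "Kc - A"] by simp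
    qed
    show ?thesis using split A01 rest by linarith
  qed
  have "\<bar>infsum wt Kc\<bar> \<le> 1"
  proof (rule ccontr)
    assume "\<not> \<bar>infsum wt Kc\<bar> \<le> 1"
    then have "0 < \<bar>infsum wt Kc\<bar> - 1" by simp
    then obtain N where "inverse (real (Suc N)) < \<bar>infsum wt Kc\<bar> - 1"
      using reals_Archimedean by blast
    moreover have "1 / real (Suc (Suc N)) \<le> inverse (real (Suc N))"
      by (simp add: inverse_eq_divide frac_le)
    ultimately show False using main[of N] by linarith
  qed
  then show ?thesis by (simp add: Kc_def)
qed



lemma term_tele:
  fixes m :: nat
  assumes "m \<ge> 1"
  shows "1 / (real m * sqrt (real m)) \<le> 2 / sqrt (real m - 1/2) - 2 / sqrt (real m + 1/2)"
proof -
  define a where "a = sqrt (real m - 1/2)"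
  define b where "b = sqrt (real m + 1/2)"
  define c where "c = sqrt (real m)"
  have m1: "real m \<ge> 1" using assms by simp
  have a0: "a > 0" unfolding a_def using m1 by simp
  have b0: "b > 0" unfolding b_def using m1 by simp
  have c0: "c > 0" unfolding c_def using m1 by simp
  have a2: "a^2 = real m - 1/2" unfolding a_def using m1 by simp
  have b2: "b^2 = real m + 1/2" unfolding b_def using m1 by simp
  have c2: "c^2 = real m" unfolding c_def by simp
  have ab: "a * b \<le> real m"
  proof -
    have "(a*b)^2 = a^2 * b^2" by (simp add: power_mult_distrib)
    also have "\<dots> = (real m - 1/2) * (real m + 1/2)" using a2 b2 by simp
    also have "\<dots> = real m ^ 2 - 1/4" by (simp add: algebra_simps power2_eq_square)
    finally have "(a*b)^2 = real m ^ 2 - 1/4" .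
    then have "(a*b)^2 \<le> (real m)^2" by simp
    then show ?thesis using a0 b0 m1 by (meson power2_le_imp_le less_le_trans zero_less_one less_imp_le)
  qed
  have apb: "a + b \<le> 2 * c"
  proof -
    have "(a+b)^2 = a^2 + b^2 + 2*(a*b)" by (simp add: power2_eq_square algebra_simps)
    also have "\<dots> \<le> 4 * real m" using a2 b2 ab by simp
    also have "\<dots> = (2*c)^2" using c2 by (simp add: power_mult_distrib)
    finally show ?thesis using c0 by (meson power2_le_imp_le less_imp_le mult_pos_pos zero_less_numeral)
  qed
  have bma: "b - a = 1 / (a + b)"
  proof -
    have "(b - a) * (a + b) = b^2 - a^2" by (simp add: power2_eq_square algebra_simps)
    also have "\<dots> = 1" using a2 b2 by simp
    finally show ?thesis using a0 b0 by (simp add: field_simps)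
  qed
  have "2 / a - 2 / b = 2 * (b - a) / (a * b)" using a0 b0 by (simp add: field_simps)
  also have "\<dots> = 2 * (1 / (a + b)) / (a * b)" by (simp only: bma)
  also have "\<dots> = 2 / (a * b * (a + b))" using a0 b0 by (simp add: field_simps)
  finally have eq: "2 / a - 2 / b = 2 / (a * b * (a + b))" .
  have "a * b * (a + b) \<le> real m * (2 * c)"
    by (rule mult_mono[OF ab apb]) (use m1 a0 b0 in auto)
  then have "2 / (real m * (2 * c)) \<le> 2 / (a * b * (a + b))"
  proof (rule divide_left_mono)
    show "0 \<le> (2::real)" by simp
    show "0 < real m * (2 * c) * (a * b * (a + b))" using a0 b0 c0 m1 by (intro mult_pos_pos) auto
  qed
  then have "1 / (real m * c) \<le> 2 / a - 2 / b" using eq c0 m1 by (simp add: field_simps)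
  then show ?thesis by (simp add: a_def b_def c_def)
qed

lemma tele_sum:
  fixes h :: "nat \<Rightarrow> real"
  assumes "M \<ge> 10"
  shows "(\<Sum>m\<in>{11..M}. h m - h (Suc m)) = h 11 - h (Suc M)"
  using assms
proof (induction M)
  case 0 then show ?case by simp
next
  case (Suc M)
  show ?case
  proof (cases "M \<ge> 10")
    case True
    have "{11..Suc M} = insert (Suc M) {11..M}" using True by auto
    then have "(\<Sum>m\<in>{11..Suc M}. h m - h (Suc m)) = (h (Suc M) - h (Suc (Suc M))) + (\<Sum>m\<in>{11..M}. h m - h (Suc m))"
      by simp
    then show ?thesis using Suc.IH True by simp
  next
    case False
    then have "Suc M = 10" using Suc.prems by simp
    then show ?thesis by simp
  qed
qed



lemma inv32_le:
  fixes m :: nat and lb :: real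
  assumes "lb > 0" "lb^2 \<le> real m" "m \<ge> 1"
  shows "1 / (real m * sqrt (real m)) \<le> 1 / (real m * lb)"
proof -
  have "lb \<le> sqrt (real m)" by (rule real_le_rsqrt[OF assms(2)])
  then show ?thesis using assms by (intro divide_left_mono mult_left_mono mult_pos_pos) auto
qed

lemma first10: "(\<Sum>m\<in>{1..10::nat}. 1 / (real m * sqrt (real m))) \<le> 1.99534"
proof -
  define f where "f m = 1 / (real m * sqrt (real m))" for m :: nat
  have s: "{1..10::nat} = {1,2,3,4,5,6,7,8,9,10}" by (simp add: set_eq_iff) presburger
  have "(\<Sum>m\<in>{1..10::nat}. f m) = f 1 + f 2 + f 3 + f 4 + f 5 + f 6 + f 7 + f 8 + f 9 + f 10"
    unfolding s by simp
  also have "\<dots> \<le> 1 / (1 * 1) + 1 / (2 * 1.41421) + 1 / (3 * 1.73205) + 1 / (4 * 2)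
     + 1 / (5 * 2.23606) + 1 / (6 * 2.44948) + 1 / (7 * 2.64575) + 1 / (8 * 2.82842)
     + 1 / (9 * 3) + 1 / (10 * 3.16227)"
  proof -
    have "f 1 \<le> 1 / (1 * 1)" unfolding f_def using inv32_le[of 1 1] by simp
    moreover have "f 2 \<le> 1 / (2 * 1.41421)" unfolding f_def using inv32_le[of "1.41421" 2] by (simp add: power2_eq_square)
    moreover have "f 3 \<le> 1 / (3 * 1.73205)" unfolding f_def using inv32_le[of "1.73205" 3] by (simp add: power2_eq_square)
    moreover have "f 4 \<le> 1 / (4 * 2)" unfolding f_def using inv32_le[of "2" 4] by (simp add: power2_eq_square)
    moreover have "f 5 \<le> 1 / (5 * 2.23606)" unfolding f_def using inv32_le[of "2.23606" 5] by (simp add: power2_eq_square)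
    moreover have "f 6 \<le> 1 / (6 * 2.44948)" unfolding f_def using inv32_le[of "2.44948" 6] by (simp add: power2_eq_square)
    moreover have "f 7 \<le> 1 / (7 * 2.64575)" unfolding f_def using inv32_le[of "2.64575" 7] by (simp add: power2_eq_square)
    moreover have "f 8 \<le> 1 / (8 * 2.82842)" unfolding f_def using inv32_le[of "2.82842" 8] by (simp add: power2_eq_square)
    moreover have "f 9 \<le> 1 / (9 * 3)" unfolding f_def using inv32_le[of "3" 9] by (simp add: power2_eq_square)
    moreover have "f 10 \<le> 1 / (10 * 3.16227)" unfolding f_def using inv32_le[of "3.16227" 10] by (simp add: power2_eq_square)
    ultimately show ?thesis by linarith
  qed
  also have "\<dots> \<le> 1.99534" by simp
  finally show ?thesis unfolding f_def .
qed

lemma zeta32_fin: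
  assumes "finite B" "B \<subseteq> {1..}"
  shows "(\<Sum>m\<in>B. 1 / (real m * sqrt (real m))) \<le> 2.6126"
proof -
  define f where "f m = 1 / (real m * sqrt (real m))" for m :: nat
  define M where "M = max 10 (Max (insert 0 B))"
  have M10: "M \<ge> 10" by (simp add: M_def)
  have BM: "B \<subseteq> {1..M}"
  proof
    fix x assume x: "x \<in> B"
    have "x \<le> Max (insert 0 B)" by (rule Max_ge) (use assms x in auto)
    then have "x \<le> M" unfolding M_def by simp
    moreover have "x \<ge> 1" using x assms by auto
    ultimately show "x \<in> {1..M}" by simp
  qed
  have fnn: "f m \<ge> 0" for m by (simp add: f_def)
  have "sum f B \<le> sum f {1..M}" by (rule sum_mono2) (use BM fnn in auto)
  also have "{1..M} = {1..10} \<union> {11..M}" using M10 by auto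
  also have "sum f \<dots> = sum f {1..10} + sum f {11..M}" by (rule sum.union_disjoint) auto
  also have "sum f {11..M} \<le> 2 / sqrt (21/2)"
  proof -
    define h where "h m = 2 / sqrt (real m - 1/2)" for m :: nat
    have "sum f {11..M} \<le> (\<Sum>m\<in>{11..M}. h m - h (Suc m))"
    proof (rule sum_mono)
      fix m assume "m \<in> {11..M}"
      then have "m \<ge> 1" by simp
      then have "f m \<le> 2 / sqrt (real m - 1/2) - 2 / sqrt (real m + 1/2)"
        unfolding f_def by (rule term_tele)
      moreover have "real (Suc m) - 1/2 = real m + 1/2" by simp
      ultimately show "f m \<le> h m - h (Suc m)" unfolding h_def by (simp add: add.commute)
    qed
    also have "\<dots> = h 11 - h (Suc M)" by (rule tele_sum[OF M10])
    also have "\<dots> \<le> h 11" by (simp add: h_def)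
    also have "h 11 = 2 / sqrt (21/2)" by (simp add: h_def)
    finally show ?thesis .
  qed
  also have "2 / sqrt (21/2) \<le> 2 / 3.2403"
  proof -
    have "3.2403 \<le> sqrt (21/2)" by (rule real_le_rsqrt) (simp add: power2_eq_square)
    then show ?thesis by (intro divide_left_mono) auto
  qed
  finally have "sum f B \<le> sum f {1..10} + 2 / 3.2403" by simp
  moreover have "sum f {1..10} \<le> 1.99534" using first10 unfolding f_def .
  ultimately have "sum f B \<le> 1.99534 + 2 / 3.2403" by linarith
  also have "\<dots> \<le> 2.6126" by simp
  finally show ?thesis unfolding f_def .
qed



lemma sqfree_sq_inj:
  fixes n n' d d' :: nat
  assumes sq: "squarefree n" "squarefree n'" and dp: "d > 0" "d' > 0"
    and eq: "n * d^2 = n' * d'^2"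
  shows "d = d' \<and> n = n'"
proof -
  define g where "g = gcd d d'"
  have g0: "g > 0" using dp by (simp add: g_def)
  obtain a b where ab: "d = a * g" "d' = b * g" "coprime a b"
    using gcd_coprime_exists[of d d'] g0 unfolding g_def by auto
  have "(n * a^2) * g^2 = (n' * b^2) * g^2"
    using eq unfolding ab by (simp add: power_mult_distrib mult.assoc)
  then have e2: "n * a^2 = n' * b^2" using g0 by simp
  have cab: "coprime (a^2) (b^2)" using ab(3) by simp
  have "a^2 dvd n' * b^2" using e2 by (metis dvd_triv_right)
  then have "a^2 dvd n'" using coprime_dvd_mult_left_iff[OF cab] by simp
  then have "a dvd 1" using squarefreeD[OF sq(2)] by blast
  then have a1: "a = 1" by simp
  have cba: "coprime (b^2) (a^2)" using cab by (simp add: coprime_commute)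
  have "b^2 dvd n * a^2" using e2 by (metis dvd_triv_right)
  then have "b^2 dvd n" using coprime_dvd_mult_left_iff[OF cba] by simp
  then have "b dvd 1" using squarefreeD[OF sq(1)] by blast
  then have b1: "b = 1" by simp
  have "d = d'" using ab a1 b1 by simp
  moreover have "n = n'" using e2 a1 b1 by simp
  ultimately show ?thesis by simp
qed

lemma zeta3_partial: "(\<Sum>d\<in>{1..15::nat}. 1 / real d ^ 3) \<ge> 1.1999"
proof -
  have s: "{1..15::nat} = {1,2,3,4,5,6,7,8,9,10,11,12,13,14,15}" by (simp add: set_eq_iff) presburger
  show ?thesis unfolding s by simp
qed

lemma f_mult_sq:
  fixes n d :: nat
  shows "1 / (real (n * d^2) * sqrt (real (n * d^2))) = (1 / (real n * sqrt (real n))) * (1 / real d ^ 3)"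
proof -
  have "sqrt (real (n * d^2)) = sqrt (real n) * real d"
    by (simp add: real_sqrt_mult)
  then show ?thesis by (simp add: power3_eq_cube power2_eq_square)
qed

lemma sqfree_sum_bound:
  assumes "finite E" "\<forall>n\<in>E. n > 0 \<and> squarefree n"
  shows "(\<Sum>n\<in>E. 1 / (real n * sqrt (real n))) \<le> 2.18"
proof -
  define f where "f m = 1 / (real m * sqrt (real m))" for m :: nat
  define D where "D = {1..15::nat}"
  define \<phi> where "\<phi> = (\<lambda>(n, d). n * d^2 :: nat)"
  have inj: "inj_on \<phi> (E \<times> D)"
  proof (rule inj_onI)
    fix x y assume x: "x \<in> E \<times> D" and y: "y \<in> E \<times> D" and e: "\<phi> x = \<phi> y"
    obtain n d where xn: "x = (n, d)" by (cases x)
    obtain n' d' where yn: "y = (n', d')" by (cases y)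
    have "squarefree n" "squarefree n'" "d > 0" "d' > 0"
      using x y assms(2) xn yn by (auto simp: D_def)
    moreover have "n * d^2 = n' * d'^2" using e xn yn by (simp add: \<phi>_def)
    ultimately have "d = d' \<and> n = n'" by (rule sqfree_sq_inj)
    then show "x = y" using xn yn by simp
  qed
  have fm: "f (n * d^2) = f n * (1 / real d ^ 3)" for n d unfolding f_def by (rule f_mult_sq)
  have fin: "finite (E \<times> D)" using assms(1) by (simp add: D_def)
  have "sum f E * (\<Sum>d\<in>D. 1 / real d ^ 3) = (\<Sum>(n,d)\<in>E \<times> D. f n * (1 / real d ^ 3))"
    by (simp add: sum_product sum.cartesian_product)
  also have "\<dots> = (\<Sum>p\<in>E \<times> D. f (\<phi> p))"
    by (rule sum.cong) (auto simp: \<phi>_def fm)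
  also have "\<dots> = sum f (\<phi> ` (E \<times> D))"
    by (simp add: sum.reindex[OF inj] comp_def)
  also have "\<dots> \<le> 2.6126" unfolding f_def
  proof (rule zeta32_fin)
    show "finite (\<phi> ` (E \<times> D))" using fin by simp
    show "\<phi> ` (E \<times> D) \<subseteq> {1..}"
    proof
      fix m assume "m \<in> \<phi> ` (E \<times> D)"
      then obtain n d where "n \<in> E" "d \<in> D" "m = n * d^2" by (auto simp: \<phi>_def)
      then show "m \<in> {1..}" using assms(2) by (auto simp: D_def)
    qed
  qed
  finally have A: "sum f E * (\<Sum>d\<in>D. 1 / real d ^ 3) \<le> 2.6126" .
  have Z: "(\<Sum>d\<in>D. 1 / real d ^ 3) \<ge> 1.1999" unfolding D_def by (rule zeta3_partial)
  have fnn: "sum f E \<ge> 0" by (rule sum_nonneg) (simp add: f_def)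
  have "sum f E * 1.1999 \<le> sum f E * (\<Sum>d\<in>D. 1 / real d ^ 3)"
    by (rule mult_left_mono[OF Z fnn])
  then have "sum f E * 1.1999 \<le> 2.6126" using A by linarith
  then have "sum f E \<le> 2.6126 / 1.1999" by (simp add: field_simps)
  also have "\<dots> \<le> 2.18" by simp
  finally show ?thesis unfolding f_def .
qed



definition tt :: "nat \<Rightarrow> nat \<Rightarrow> nat \<Rightarrow> real" where
  "tt k l r = moebius (r * k * l) * real (totient k) / (real r * real k ^ 3 * real l ^ 2)"

definition KK :: "real \<Rightarrow> nat \<Rightarrow> nat \<Rightarrow> nat \<Rightarrow> nat set" where
  "KK X q l r = {k. k > 0 \<and> real (k^2 * l * r) > X \<and> coprime k l \<and> coprime k q}"

definition hb :: "real \<Rightarrow> nat \<Rightarrow> nat \<Rightarrow> real" where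
  "hb X l r = (if squarefree l \<and> squarefree r then sqrt (real l * real r / X) / (real r * real l ^ 2) else 0)"

lemma abs_tt_le: "\<bar>tt k l r\<bar> \<le> (1 / (real r * real l ^ 2)) * (real (totient k) / real k ^ 3)"
proof -
  have "\<bar>tt k l r\<bar> = \<bar>moebius (r * k * l)\<bar> * ((1 / (real r * real l ^ 2)) * (real (totient k) / real k ^ 3))"
    by (simp add: tt_def abs_mult)
  also have "\<dots> \<le> 1 * ((1 / (real r * real l ^ 2)) * (real (totient k) / real k ^ 3))"
    by (rule mult_right_mono) (auto simp: abs_moebius_le)
  finally show ?thesis by simp
qed

lemma pointwise:
  fixes q l r :: nat and X :: real
  assumes q0: "q > 0" and X0: "X > 0" and l0: "l > 0" and r0: "r > 0"
    and rq: "r dvd q" and lq: "coprime l q"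
  shows "\<bar>\<Sum>\<^sub>\<infinity>k\<in>KK X q l r. tt k l r\<bar> \<le> hb X l r"
proof (cases "squarefree l \<and> squarefree r")
  case False
  have "tt k l r = 0" for k
  proof -
    have "\<not> squarefree (r * k * l)"
    proof
      assume sq: "squarefree (r * k * l)"
      have "squarefree l" by (rule squarefree_mono[OF _ sq]) simp
      moreover have "squarefree r" by (rule squarefree_mono[OF _ sq]) simp
      ultimately show False using False by simp
    qed
    then show ?thesis by (simp add: tt_def moebius_not_sqfree)
  qed
  moreover have "hb X l r = 0" unfolding hb_def using False by (subst if_not_P) auto
  ultimately show ?thesis by simp
next
  case True
  define c where "c = 1 / (real r * real l ^ 2)"
  have c0: "c > 0" using l0 r0 by (simp add: c_def)
  have hb_eq: "hb X l r = c * sqrt (real l * real r / X)"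
    using True by (simp add: hb_def c_def)
  show ?thesis
  proof (cases "real (l * r) > X")
    case True
    have Keq: "KK X q l r = {k. 0 < k \<and> coprime k (l * q)}"
    proof -
      have "k \<in> KK X q l r \<longleftrightarrow> k \<in> {k. 0 < k \<and> coprime k (l * q)}" for k
      proof
        assume "k \<in> KK X q l r" then show "k \<in> {k. 0 < k \<and> coprime k (l * q)}"
          by (simp add: KK_def)
      next
        assume k: "k \<in> {k. 0 < k \<and> coprime k (l * q)}"
        then have k1: "k \<ge> 1" by simp
        have "real (l * r) \<le> real (k^2 * l * r)"
        proof -
          have "1 * (l * r) \<le> k^2 * (l * r)" using k1 by (intro mult_right_mono) auto
          then have "l * r \<le> k^2 * l * r" by (simp add: mult.assoc)
          then show ?thesis by (rule of_nat_le_iff[THEN iffD2])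
        qed
        then show "k \<in> KK X q l r" using k True by (simp add: KK_def)
      qed
      then show ?thesis by blast
    qed
    have teq: "tt k l r = (moebius (r * l) * c) * wt k" if "k \<in> KK X q l r" for k
    proof -
      have ck: "coprime k l" "coprime k q" using that by (auto simp: KK_def)
      have "coprime k r" using coprime_divisors[OF dvd_refl rq ck(2)] .
      then have "coprime k (r * l)" using ck(1) by simp
      then have "moebius (k * (r * l)) = moebius k * moebius (r * l)" by (rule moebius_mult_coprime)
      moreover have "r * k * l = k * (r * l)" by (simp add: ac_simps)
      ultimately show ?thesis by (simp add: tt_def wt_def c_def field_simps)
    qed
    have "(\<Sum>\<^sub>\<infinity>k\<in>KK X q l r. tt k l r) = (\<Sum>\<^sub>\<infinity>k\<in>KK X q l r. (moebius (r * l) * c) * wt k)"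
      by (rule infsum_cong) (rule teq)
    also have "\<dots> = (moebius (r * l) * c) * (\<Sum>\<^sub>\<infinity>k\<in>KK X q l r. wt k)"
      by (rule infsum_cmult_right')
    finally have geq: "(\<Sum>\<^sub>\<infinity>k\<in>KK X q l r. tt k l r) = (moebius (r * l) * c) * (\<Sum>\<^sub>\<infinity>k\<in>{k. 0 < k \<and> coprime k (l * q)}. wt k)"
      using Keq by simp
    have Pm: "\<bar>\<Sum>\<^sub>\<infinity>k\<in>{k. 0 < k \<and> coprime k (l * q)}. wt k\<bar> \<le> 1"
      by (rule Pm_bound) (use l0 q0 in simp)
    have "\<bar>(moebius (r * l) * c) * (\<Sum>\<^sub>\<infinity>k\<in>{k. 0 < k \<and> coprime k (l * q)}. wt k)\<bar> \<le> c * 1"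
    proof -
      define P where "P = (\<Sum>\<^sub>\<infinity>k\<in>{k. 0 < k \<and> coprime k (l * q)}. wt k)"
      have P1: "\<bar>P\<bar> \<le> 1" unfolding P_def by (rule Pm)
      have "\<bar>(moebius (r * l) * c) * P\<bar> = c * (\<bar>moebius (r * l)\<bar> * \<bar>P\<bar>)"
        using c0 by (simp add: abs_mult)
      also have "\<dots> \<le> c * 1"
        using mult_le_one[OF abs_moebius_le abs_ge_zero P1] c0 by (intro mult_left_mono) auto
      finally show ?thesis unfolding P_def .
    qed
    also have "c * 1 \<le> c * sqrt (real l * real r / X)"
    proof -
      have "1 \<le> real l * real r / X" using True X0 by simp
      then have "1 \<le> sqrt (real l * real r / X)" by simp
      then show ?thesis using c0 by (intro mult_left_mono) auto
    qed
    finally show ?thesis using geq hb_eq by simp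
  next
    case False
    then have lrX: "real l * real r \<le> X" by simp
    define s where "s = sqrt (X / (real l * real r))"
    have lrpos: "real l * real r > 0" using l0 r0 by simp
    have s1: "s \<ge> 1" unfolding s_def using lrX lrpos by simp
    define n where "n = nat \<lfloor>s\<rfloor> + 1"
    have ns: "real n > s" unfolding n_def using s1 by linarith
    have n2: "n \<ge> 2" unfolding n_def using s1 by linarith
    have Kn: "KK X q l r \<subseteq> {n..}"
    proof
      fix k assume "k \<in> KK X q l r"
      then have kX: "real (k^2 * l * r) > X" by (simp add: KK_def)
      then have "real k ^ 2 * (real l * real r) > X" by (simp add: mult.assoc)
      then have "real k ^ 2 > X / (real l * real r)" using lrpos by (simp add: divide_less_eq)
      then have "s < real k" unfolding s_def by (metis real_less_lsqrt of_nat_0_le_iff)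
      then have "real (nat \<lfloor>s\<rfloor>) < real k" using s1 by linarith
      then show "k \<in> {n..}" unfolding n_def by simp
    qed
    have sumT: "(\<lambda>k. real (totient k) / real k ^ 3) summable_on KK X q l r"
      by (rule tail_totient(1)[OF n2 Kn])
    have infT: "(\<Sum>\<^sub>\<infinity>k\<in>KK X q l r. real (totient k) / real k ^ 3) \<le> 1 / real n"
      by (rule tail_totient(2)[OF n2 Kn])
    have sumc: "(\<lambda>k. c * (real (totient k) / real k ^ 3)) summable_on KK X q l r"
      using summable_on_cmult_right[OF sumT] by simp
    have absum: "(\<lambda>k. norm (tt k l r)) summable_on KK X q l r"
      by (rule summable_on_comparison_test[OF sumc]) (use abs_tt_le c_def in auto)
    have "\<bar>\<Sum>\<^sub>\<infinity>k\<in>KK X q l r. tt k l r\<bar> \<le> (\<Sum>\<^sub>\<infinity>k\<in>KK X q l r. norm (tt k l r))"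
      using norm_infsum_bound[OF absum] by simp
    also have "\<dots> \<le> (\<Sum>\<^sub>\<infinity>k\<in>KK X q l r. c * (real (totient k) / real k ^ 3))"
      by (rule infsum_mono[OF absum sumc]) (use abs_tt_le c_def in auto)
    also have "\<dots> = c * (\<Sum>\<^sub>\<infinity>k\<in>KK X q l r. real (totient k) / real k ^ 3)"
      by (rule infsum_cmult_right')
    also have "\<dots> \<le> c * (1 / real n)" using infT c0 by (intro mult_left_mono) auto
    also have "\<dots> \<le> c * (1 / s)"
      using ns s1 c0 by (intro mult_left_mono divide_left_mono) auto
    also have "1 / s = sqrt (real l * real r / X)"
      unfolding s_def using lrpos X0 by (simp add: real_sqrt_divide)
    finally show ?thesis using hb_eq by simp
  qed
qed



lemma hb_split:
  assumes "squarefree l" "squarefree r" "l > 0" "r > 0" "X > 0"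
  shows "hb X l r = (1 / sqrt X) * (1 / (real l * sqrt (real l))) * (1 / sqrt (real r))"
proof -
  have sl: "sqrt (real l) > 0" "sqrt (real r) > 0" "sqrt X > 0" using assms by auto
  have "sqrt (real l * real r / X) = sqrt (real l) * sqrt (real r) / sqrt X"
    by (simp add: real_sqrt_mult real_sqrt_divide)
  moreover have "real l ^ 2 = real l * (sqrt (real l) * sqrt (real l))" by (simp add: power2_eq_square)
  moreover have "real r = sqrt (real r) * sqrt (real r)" by simp
  ultimately have "hb X l r = sqrt (real l) * sqrt (real r) / sqrt X /
       (sqrt (real r) * sqrt (real r) * (real l * (sqrt (real l) * sqrt (real l))))"
    using assms by (simp add: hb_def)
  also have "\<dots> = (1 / sqrt X) * (1 / (real l * sqrt (real l))) * (1 / sqrt (real r))"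
    using sl assms by (simp add: field_simps)
  finally show ?thesis .
qed

lemma recip_prod:
  fixes g :: "nat \<Rightarrow> real"
  shows "1 / prod g A = (\<Prod>p\<in>A. 1 / g p)"
proof -
  have "1 / prod g A = prod (\<lambda>_. 1) A / prod g A" by simp
  also have "\<dots> = (\<Prod>p\<in>A. 1 / g p)" by (rule prod_dividef[symmetric])
  finally show ?thesis .
qed

lemma sum_Dq_sqrt:
  fixes q :: nat
  shows "(\<Sum>d\<in>DS (prime_factors q). 1 / sqrt (real d)) = (\<Prod>p\<in>prime_factors q. 1 + 1 / sqrt (real p))"
proof -
  have "(\<Sum>d\<in>DS (prime_factors q). 1 / sqrt (real d)) =
        (\<Sum>d\<in>DS (prime_factors q). \<Prod>p\<in>prime_factors d. 1 / sqrt (real p))"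
  proof (rule sum.cong)
    fix d assume "d \<in> DS (prime_factors q)"
    then have "real d = (\<Prod>p\<in>prime_factors d. real p)" by (rule DS_prod_real)
    then have "sqrt (real d) = (\<Prod>p\<in>prime_factors d. sqrt (real p))" by (simp add: sqrt_prod_real)
    then show "1 / sqrt (real d) = (\<Prod>p\<in>prime_factors d. 1 / sqrt (real p))" by (simp add: recip_prod)
  qed simp
  also have "\<dots> = (\<Prod>p\<in>prime_factors q. 1 + 1 / sqrt (real p))"
    by (rule sum_DS) auto
  finally show ?thesis .
qed

lemma sum_Dq_32:
  fixes q :: nat
  shows "(\<Sum>d\<in>DS (prime_factors q). 1 / (real d * sqrt (real d))) = (\<Prod>p\<in>prime_factors q. 1 + 1 / (real p * sqrt (real p)))"
proof -
  have "(\<Sum>d\<in>DS (prime_factors q). 1 / (real d * sqrt (real d))) =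
        (\<Sum>d\<in>DS (prime_factors q). \<Prod>p\<in>prime_factors d. 1 / (real p * sqrt (real p)))"
  proof (rule sum.cong)
    fix d assume "d \<in> DS (prime_factors q)"
    then have e: "real d = (\<Prod>p\<in>prime_factors d. real p)" by (rule DS_prod_real)
    then have "sqrt (real d) = (\<Prod>p\<in>prime_factors d. sqrt (real p))" by (simp add: sqrt_prod_real)
    then have "real d * sqrt (real d) = (\<Prod>p\<in>prime_factors d. real p * sqrt (real p))"
      using e by (simp add: prod.distrib)
    then show "1 / (real d * sqrt (real d)) = (\<Prod>p\<in>prime_factors d. 1 / (real p * sqrt (real p)))"
      by (simp add: recip_prod)
  qed simp
  also have "\<dots> = (\<Prod>p\<in>prime_factors q. 1 + 1 / (real p * sqrt (real p)))"
    by (rule sum_DS) auto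
  finally show ?thesis .
qed

lemma ratio_id:
  fixes a s :: real
  assumes "a > 0" "s > 0"
  shows "(a * s + a) / (a * s + 1) = (1 + 1 / s) / (1 + 1 / (a * s))"
proof -
  have as: "a * s > 0" using assms by simp
  have e1: "(1 + 1 / s) * (a * s) = a * s + a" using assms by (simp add: algebra_simps)
  have e2: "(1 + 1 / (a * s)) * (a * s) = a * s + 1" using as assms by (simp add: algebra_simps)
  have "(1 + 1 / s) / (1 + 1 / (a * s)) = ((1 + 1 / s) * (a * s)) / ((1 + 1 / (a * s)) * (a * s))"
    by (rule mult_divide_mult_cancel_right[symmetric]) (use as assms in simp)
  also have "\<dots> = (a * s + a) / (a * s + 1)"
    by (simp only: e1 e2)
  finally show ?thesis by simp
qed

lemma j1_eq:
  "j1_star q = (\<Prod>p\<in>prime_factors q. 1 + 1 / sqrt (real p)) / (\<Prod>p\<in>prime_factors q. 1 + 1 / (real p * sqrt (real p)))"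
proof -
  have "j1_star q = (\<Prod>p\<in>prime_factors q. (1 + 1 / sqrt (real p)) / (1 + 1 / (real p * sqrt (real p))))"
    unfolding j1_star_def
  proof (rule prod.cong)
    fix p assume "p \<in> prime_factors q"
    then have pp: "real p > 0" by (auto simp: in_prime_factors_iff prime_gt_0_nat)
    have sp: "sqrt (real p) > 0" using pp by simp
    have pw: "real p powr (3/2) = real p * sqrt (real p)"
    proof -
      have "real p powr (3/2) = real p powr (1 + 1/2)" by simp
      also have "\<dots> = real p powr 1 * real p powr (1/2)" by (rule powr_add)
      also have "\<dots> = real p * sqrt (real p)" using pp by (simp add: powr_half_sqrt)
      finally show ?thesis .
    qed
    show "(real p powr (3/2) + real p) / (real p powr (3/2) + 1) =
          (1 + 1 / sqrt (real p)) / (1 + 1 / (real p * sqrt (real p)))"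
      unfolding pw by (rule ratio_id[OF pp sp])
  qed simp
  also have "\<dots> = (\<Prod>p\<in>prime_factors q. 1 + 1 / sqrt (real p)) / (\<Prod>p\<in>prime_factors q. 1 + 1 / (real p * sqrt (real p)))"
    by (rule prod_dividef)
  finally show ?thesis .
qed



lemma cop_DS:
  assumes "d \<in> DS (prime_factors q)" "coprime l q"
  shows "coprime d l"
proof -
  have d0: "d > 0" using assms(1) by (simp add: DS_def)
  have "\<forall>p\<in>prime_factors d. coprime p l"
  proof
    fix p assume "p \<in> prime_factors d"
    then have "p \<in> prime_factors q" using assms(1) by (auto simp: DS_def)
    then have "p dvd q" by (simp add: in_prime_factors_iff)
    moreover have "coprime q l" using assms(2) by (simp add: coprime_commute)
    ultimately show "coprime p l" using coprime_divisors[OF _ dvd_refl] by blast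
  qed
  then show ?thesis by (rule coprime_of_pf[OF d0])
qed

lemma f32_mult:
  fixes l d :: nat
  shows "1 / (real (l * d) * sqrt (real (l * d))) = (1 / (real l * sqrt (real l))) * (1 / (real d * sqrt (real d)))"
  by (simp add: real_sqrt_mult)

lemma cross_bound:
  fixes q :: nat
  assumes "finite L" "\<forall>l\<in>L. l > 0 \<and> squarefree l \<and> coprime l q"
  shows "(\<Sum>l\<in>L. 1 / (real l * sqrt (real l))) * (\<Sum>d\<in>DS (prime_factors q). 1 / (real d * sqrt (real d))) \<le> 2.18"
proof -
  define f where "f m = 1 / (real m * sqrt (real m))" for m :: nat
  define D where "D = DS (prime_factors q)"
  have fD: "finite D" unfolding D_def by (rule finite_DS) auto
  define \<mu> where "\<mu> = (\<lambda>(l, d). l * d :: nat)"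
  have fm: "f (l * d) = f l * f d" for l d unfolding f_def by (rule f32_mult)
  have inj: "inj_on \<mu> (L \<times> D)"
  proof (rule inj_onI)
    fix x y assume x: "x \<in> L \<times> D" and y: "y \<in> L \<times> D" and e: "\<mu> x = \<mu> y"
    obtain l d where xn: "x = (l, d)" by (cases x)
    obtain l' d' where yn: "y = (l', d')" by (cases y)
    have l: "l \<in> L" "l' \<in> L" and d: "d \<in> D" "d' \<in> D" using x y xn yn by auto
    have eq: "l * d = l' * d'" using e xn yn by (simp add: \<mu>_def)
    have c1: "coprime d l'" using cop_DS[of d q l'] d l assms(2) by (simp add: D_def)
    have c2: "coprime d' l" using cop_DS[of d' q l] d l assms(2) by (simp add: D_def)
    have "d dvd l' * d'" using eq by (metis dvd_triv_right)
    then have dd: "d dvd d'" using coprime_dvd_mult_right_iff[OF c1] by simp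
    have "d' dvd l * d" using eq by (metis dvd_triv_right)
    then have dd': "d' dvd d" using coprime_dvd_mult_right_iff[OF c2] by simp
    have "d = d'" using dd dd' by (rule dvd_antisym)
    moreover have "d > 0" using d by (simp add: D_def DS_def)
    ultimately have "l = l'" using eq by simp
    then show "x = y" using xn yn \<open>d = d'\<close> by simp
  qed
  have "sum f L * sum f D = (\<Sum>(l,d)\<in>L \<times> D. f l * f d)"
    by (simp add: sum_product sum.cartesian_product)
  also have "\<dots> = (\<Sum>p\<in>L \<times> D. f (\<mu> p))"
    by (rule sum.cong) (auto simp: \<mu>_def fm)
  also have "\<dots> = sum f (\<mu> ` (L \<times> D))"
    by (simp add: sum.reindex[OF inj] comp_def)
  also have "\<dots> \<le> 2.18" unfolding f_def
  proof (rule sqfree_sum_bound)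
    show "finite (\<mu> ` (L \<times> D))" using assms(1) fD by simp
    show "\<forall>n\<in>\<mu> ` (L \<times> D). 0 < n \<and> squarefree n"
    proof
      fix n assume "n \<in> \<mu> ` (L \<times> D)"
      then obtain l d where ld: "l \<in> L" "d \<in> D" "n = l * d" by (auto simp: \<mu>_def)
      have c: "coprime d l" using cop_DS[of d q l] ld assms(2) by (simp add: D_def)
      have "squarefree l" "l > 0" using ld assms(2) by auto
      moreover have "squarefree d" "d > 0" using ld by (auto simp: D_def DS_def)
      ultimately show "0 < n \<and> squarefree n"
        using squarefree_mult_coprime[of l d] c ld by (simp add: coprime_commute)
    qed
  qed
  finally show ?thesis by (simp add: f_def D_def)
qed

lemma inv_sq_sum: "(\<Sum>l\<in>{1..M::nat}. 1 / real l ^ 2) \<le> 2"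
proof -
  have "(\<Sum>l\<in>{1..M}. 1 / real l ^ 2) \<le> (\<Sum>l\<in>{1..M}. 2 * (1 / (real l * (real l + 1))))"
  proof (rule sum_mono)
    fix l assume "l \<in> {1..M}"
    then have l1: "real l \<ge> 1" by simp
    then have "real l * (real l + 1) \<le> 2 * real l ^ 2" by (simp add: power2_eq_square algebra_simps)
    then show "1 / real l ^ 2 \<le> 2 * (1 / (real l * (real l + 1)))"
      using l1 by (simp add: divide_simps)
  qed
  also have "\<dots> = 2 * (\<Sum>l\<in>{1..M}. 1 / (real l * (real l + 1)))" by (simp add: sum_distrib_left)
  also have "\<dots> = 2 * (1 / real 1 - 1 / (real M + 1))" by (subst telescope_recip) auto
  also have "\<dots> \<le> 2" by simp
  finally show ?thesis .
qed

lemma triple_summable: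
  fixes q :: nat
  assumes "S \<subseteq> ({1..} \<times> {1..q}) \<times> {1..}"
  shows "(\<lambda>x. norm (tt (snd x) (fst (fst x)) (snd (fst x)))) summable_on S"
proof -
  have fb: "sum (\<lambda>x. norm (tt (snd x) (fst (fst x)) (snd (fst x)))) F \<le> 4 * real q"
    if F: "finite F" "F \<subseteq> S" for F
  proof -
    define M where "M = Max (insert 0 (fst ` fst ` F \<union> snd ` F))"
    have FB: "F \<subseteq> ({1..M} \<times> {1..q}) \<times> {1..M}"
    proof
      fix x assume x: "x \<in> F"
      have fin: "finite (insert 0 (fst ` fst ` F \<union> snd ` F))" using F(1) by simp
      have "fst (fst x) \<le> M" unfolding M_def by (rule Max_ge[OF fin]) (use x in auto)
      moreover have "snd x \<le> M" unfolding M_def by (rule Max_ge[OF fin]) (use x in auto)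
      moreover have "x \<in> ({1..} \<times> {1..q}) \<times> {1..}" using x F assms by blast
      ultimately show "x \<in> ({1..M} \<times> {1..q}) \<times> {1..M}" by (cases x) auto
    qed
    define g where "g x = (1 / real (fst (fst x)) ^ 2) * (1 / real (snd x) ^ 2)" for x :: "(nat \<times> nat) \<times> nat"
    have tg: "norm (tt (snd x) (fst (fst x)) (snd (fst x))) \<le> g x" if "x \<in> ({1..M} \<times> {1..q}) \<times> {1..M}" for x
    proof -
      obtain l r k where x: "x = ((l, r), k)" by (metis prod.collapse)
      have lrk: "l \<ge> 1" "r \<ge> 1" "k \<ge> 1" using that x by auto
      have "\<bar>tt k l r\<bar> \<le> (1 / (real r * real l ^ 2)) * (real (totient k) / real k ^ 3)"
        by (rule abs_tt_le)
      also have "\<dots> \<le> (1 / real l ^ 2) * (1 / real k ^ 2)"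
      proof (rule mult_mono)
        show "1 / (real r * real l ^ 2) \<le> 1 / real l ^ 2"
          using lrk by (intro divide_left_mono) (auto simp: mult_le_cancel_right1)
        have "real (totient k) \<le> real k" by (simp add: totient_le)
        then have "real (totient k) / real k ^ 3 \<le> real k / real k ^ 3"
          by (rule divide_right_mono) simp
        also have "\<dots> = 1 / real k ^ 2" using lrk by (simp add: power3_eq_cube power2_eq_square)
        finally show "real (totient k) / real k ^ 3 \<le> 1 / real k ^ 2" .
      qed auto
      finally show ?thesis by (simp add: x g_def)
    qed
    have "sum (\<lambda>x. norm (tt (snd x) (fst (fst x)) (snd (fst x)))) F \<le> sum g F"
      by (rule sum_mono) (use FB tg in blast)
    also have "\<dots> \<le> sum g (({1..M} \<times> {1..q}) \<times> {1..M})"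
      by (rule sum_mono2) (use FB in \<open>auto simp: g_def\<close>)
    also have "\<dots> = (\<Sum>p\<in>{1..M} \<times> {1..q}. \<Sum>k\<in>{1..M}. g (p, k))"
      by (simp only: sum.cartesian_product case_prod_eta)
    also have "\<dots> = (\<Sum>l\<in>{1..M}. \<Sum>r\<in>{1..q}. \<Sum>k\<in>{1..M}. g ((l, r), k))"
      by (simp add: sum.cartesian_product')
    also have "\<dots> = (\<Sum>l\<in>{1..M}. \<Sum>r\<in>{1..q}. (1 / real l ^ 2) * (\<Sum>k\<in>{1..M}. 1 / real k ^ 2))"
      by (simp add: g_def sum_distrib_left)
    also have "\<dots> = (\<Sum>l\<in>{1..M}. real q * ((1 / real l ^ 2) * (\<Sum>k\<in>{1..M}. 1 / real k ^ 2)))"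
      by simp
    also have "\<dots> = real q * ((\<Sum>l\<in>{1..M}. 1 / real l ^ 2) * (\<Sum>k\<in>{1..M}. 1 / real k ^ 2))"
      by (simp only: sum_distrib_left[symmetric] sum_distrib_right[symmetric])
    also have "\<dots> \<le> real q * (2 * 2)"
      by (intro mult_left_mono mult_mono inv_sq_sum) (auto intro: sum_nonneg)
    finally show ?thesis by simp
  qed
  show ?thesis
    using nonneg_fin_bound(1)[of S "\<lambda>x. norm (tt (snd x) (fst (fst x)) (snd (fst x)))" "4 * real q"] fb
    by auto
qed



lemma hb_nonneg:
  assumes "X > 0"
  shows "hb X l r \<ge> 0"
  using assms by (simp add: hb_def)

lemma fin_hb_bound:
  fixes q :: nat and X :: real
  assumes q0: "q > 0" and X0: "X > 0" and fG: "finite G"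
    and GJ: "G \<subseteq> {(l, r). l > 0 \<and> r > 0 \<and> r dvd q \<and> coprime l q}"
  shows "(\<Sum>p\<in>G. hb X (fst p) (snd p)) \<le> 2.18 / sqrt X * j1_star q"
proof -
  define h where "h p = hb X (fst p) (snd p)" for p :: "nat \<times> nat"
  define L where "L = {l \<in> fst ` G. squarefree l}"
  define D where "D = DS (prime_factors q)"
  define f where "f m = 1 / (real m * sqrt (real m))" for m :: nat
  define A where "A = (\<Prod>p\<in>prime_factors q. 1 + 1 / sqrt (real p))"
  define C where "C = (\<Prod>p\<in>prime_factors q. 1 + 1 / (real p * sqrt (real p)))"
  have fL: "finite L" unfolding L_def using fG by simp
  have fD: "finite D" unfolding D_def by (rule finite_DS) auto
  have Lprop: "\<forall>l\<in>L. l > 0 \<and> squarefree l \<and> coprime l q"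
    using GJ unfolding L_def by auto
  have zero: "h p = 0" if "p \<in> G - G \<inter> (L \<times> D)" for p
  proof (rule ccontr)
    assume nz: "h p \<noteq> 0"
    obtain l r where p: "p = (l, r)" by (cases p)
    have sq: "squarefree l" "squarefree r" using nz p by (auto simp: h_def hb_def split: if_splits)
    have pG: "(l, r) \<in> G" using that p by simp
    then have lr: "l > 0" "r > 0" "r dvd q" using GJ by auto
    have "l \<in> L" using pG sq unfolding L_def by force
    moreover have "r \<in> D"
      using lr sq q0 dvd_prime_factors[of q r] unfolding D_def DS_def by auto
    ultimately show False using that p by simp
  qed
  have "(\<Sum>p\<in>G. h p) = (\<Sum>p\<in>G \<inter> (L \<times> D). h p)"
    by (rule sum.mono_neutral_right) (use fG zero in auto)
  also have "\<dots> \<le> (\<Sum>p\<in>L \<times> D. h p)"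
    by (rule sum_mono2) (use fL fD in \<open>auto simp: h_def hb_nonneg[OF X0]\<close>)
  also have "\<dots> = (\<Sum>(l,r)\<in>L \<times> D. (1 / sqrt X) * f l * (1 / sqrt (real r)))"
  proof (rule sum.cong)
    fix p assume "p \<in> L \<times> D"
    then obtain l r where p: "p = (l, r)" "l \<in> L" "r \<in> D" by auto
    have "squarefree l" "l > 0" using p Lprop by auto
    moreover have "squarefree r" "r > 0" using p by (auto simp: D_def DS_def)
    ultimately show "h p = (case p of (l, r) \<Rightarrow> (1 / sqrt X) * f l * (1 / sqrt (real r)))"
      using hb_split[of l r X] X0 p by (simp add: h_def f_def)
  qed simp
  also have "\<dots> = (\<Sum>l\<in>L. \<Sum>r\<in>D. (1 / sqrt X) * (f l * (1 / sqrt (real r))))"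
    by (simp only: sum.cartesian_product mult.assoc)
  also have "\<dots> = (1 / sqrt X) * (\<Sum>l\<in>L. \<Sum>r\<in>D. f l * (1 / sqrt (real r)))"
    by (simp only: sum_distrib_left)
  also have "\<dots> = (1 / sqrt X) * ((\<Sum>l\<in>L. f l) * (\<Sum>r\<in>D. 1 / sqrt (real r)))"
    by (simp only: sum_product)
  also have "(\<Sum>r\<in>D. 1 / sqrt (real r)) = A"
    unfolding D_def A_def by (rule sum_Dq_sqrt)
  finally have s1: "(\<Sum>p\<in>G. h p) \<le> (1 / sqrt X) * ((\<Sum>l\<in>L. f l) * A)" .
  have CD: "(\<Sum>d\<in>D. f d) = C" unfolding D_def C_def f_def by (rule sum_Dq_32)
  have Cpos: "C > 0" unfolding C_def by (rule prod_pos) (auto intro: add_pos_nonneg)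
  have Apos: "A \<ge> 0" unfolding A_def by (rule prod_nonneg) (auto intro: add_nonneg_nonneg)
  have cb: "(\<Sum>l\<in>L. f l) * C \<le> 2.18"
    using cross_bound[OF fL Lprop] CD unfolding f_def D_def by simp
  then have "(\<Sum>l\<in>L. f l) \<le> 2.18 / C" using Cpos by (simp add: field_simps)
  then have "(1 / sqrt X) * ((\<Sum>l\<in>L. f l) * A) \<le> (1 / sqrt X) * ((2.18 / C) * A)"
    using Apos X0 by (intro mult_left_mono mult_right_mono) auto
  also have "\<dots> = 2.18 / sqrt X * (A / C)" by simp
  also have "A / C = j1_star q" unfolding A_def C_def by (rule j1_eq[symmetric])
  finally show ?thesis using s1 unfolding h_def by simp
qed



theorem mainTheorem14:
  fixes q :: nat and X :: real
  assumes "q > 0" and "X > 0"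
  shows "\<bar>r2_star X q\<bar> \<le> 2.18 / sqrt X * j1_star q"
proof -
  note q0 = assms(1) and X0 = assms(2)
  define J :: "(nat \<times> nat) set" where "J = {(l, r). l > 0 \<and> r > 0 \<and> r dvd q \<and> coprime l q}"
  define B where "B = (\<lambda>p::nat \<times> nat. KK X q (fst p) (snd p))"
  define S where "S = Sigma J B"
  define F where "F = (\<lambda>x::(nat \<times> nat) \<times> nat. tt (snd x) (fst (fst x)) (snd (fst x)))"
  define \<psi> where "\<psi> = (\<lambda>x::(nat \<times> nat) \<times> nat. (snd x, fst (fst x), snd (fst x)))"
  define g where "g = (\<lambda>(k, l, r). moebius (r * k * l) * real (totient k) / (real r * real k ^ 3 * real l ^ 2))"
  have bij: "bij_betw \<psi> S (r2_index X q)"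
  proof (rule bij_betw_byWitness[where f' = "\<lambda>(k, l, r). ((l, r), k)"])
    show "\<forall>a\<in>S. (\<lambda>(k, l, r). ((l, r), k)) (\<psi> a) = a" by (auto simp: \<psi>_def)
    show "\<forall>a'\<in>r2_index X q. \<psi> ((\<lambda>(k, l, r). ((l, r), k)) a') = a'" by (auto simp: \<psi>_def)
    show "\<psi> ` S \<subseteq> r2_index X q"
      by (auto simp: \<psi>_def S_def J_def B_def KK_def r2_index_def)
    show "(\<lambda>(k, l, r). ((l, r), k)) ` r2_index X q \<subseteq> S"
      by (auto simp: S_def J_def B_def KK_def r2_index_def)
  qed
  have r2eq: "r2_star X q = infsum F S"
  proof -
    have "infsum F S = infsum (\<lambda>x. g (\<psi> x)) S"
      by (rule infsum_cong) (simp add: F_def g_def \<psi>_def tt_def split: prod.splits)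
    also have "\<dots> = infsum g (r2_index X q)" by (rule infsum_reindex_bij_betw[OF bij])
    finally show ?thesis by (simp add: r2_star_def g_def)
  qed
  have Ssub: "S \<subseteq> ({1..} \<times> {1..q}) \<times> {1..}"
  proof
    fix x assume "x \<in> S"
    then obtain l r k where x: "x = ((l, r), k)" "l > 0" "r > 0" "r dvd q" "k > 0"
      by (auto simp: S_def J_def B_def KK_def)
    then have "r \<le> q" using q0 by (simp add: dvd_imp_le)
    then show "x \<in> ({1..} \<times> {1..q}) \<times> {1..}" using x by auto
  qed
  have absF: "(\<lambda>x. norm (F x)) summable_on S"
    using triple_summable[OF Ssub] by (simp add: F_def)
  have sumF: "F summable_on S" using absF abs_summable_summable by blast
  define G where "G = (\<lambda>p::nat \<times> nat. \<Sum>\<^sub>\<infinity>k\<in>B p. F (p, k))"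
  have FG: "infsum F S = infsum G J"
    unfolding G_def S_def using infsum_Sigma_banach[of F J B] sumF S_def by simp
  define H where "H = (\<lambda>p::nat \<times> nat. hb X (fst p) (snd p))"
  have GH: "norm (G p) \<le> H p" if "p \<in> J" for p
  proof -
    obtain l r where p: "p = (l, r)" by (cases p)
    have lr: "l > 0" "r > 0" "r dvd q" "coprime l q" using that p by (auto simp: J_def)
    have "G p = (\<Sum>\<^sub>\<infinity>k\<in>KK X q l r. tt k l r)" by (simp add: G_def B_def F_def p)
    then show ?thesis using pointwise[OF q0 X0 lr] by (simp add: H_def p)
  qed
  have Hfin: "sum H G' \<le> 2.18 / sqrt X * j1_star q" if "finite G'" "G' \<subseteq> J" for G'
    using fin_hb_bound[OF q0 X0 that(1)] that(2) by (simp add: H_def J_def)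
  have Hnn: "\<And>p. p \<in> J \<Longrightarrow> 0 \<le> H p" by (simp add: H_def hb_nonneg[OF X0])
  have Hsum: "H summable_on J" and Hinf: "infsum H J \<le> 2.18 / sqrt X * j1_star q"
    using nonneg_fin_bound[of J H "2.18 / sqrt X * j1_star q"] Hnn Hfin by auto
  have nGsum: "(\<lambda>p. norm (G p)) summable_on J"
    by (rule summable_on_comparison_test[OF Hsum]) (use GH in auto)
  have "\<bar>infsum G J\<bar> \<le> infsum (\<lambda>p. norm (G p)) J"
    using norm_infsum_bound[OF nGsum] by simp
  also have "\<dots> \<le> infsum H J"
    by (rule infsum_mono[OF nGsum Hsum]) (use GH in auto)
  also have "\<dots> \<le> 2.18 / sqrt X * j1_star q" by (rule Hinf)
  finally show ?thesis using r2eq FG by simp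
qed


end
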